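(* Let $A,B\in \mathbb{C}^{n\times n}$. Then the following are equivalent: (1) $A\leq^{\mathrm{cEP}}B$. (2) There exist $E_1=AA^{\mathrm{cEP}}$ and $E_2=E_2^*=E_2^2$ such that $A=\begin{pmatrix} T_1&S_1&S_2\\ 0&N_1&N_2\\ 0&N_3&N_4\end{pmatrix}_{E\times E}$, $B=\begin{pmatrix} T_1&S_1&S_2\\ 0&T_3&T_4\\ 0&0&T_5\end{pmatrix}_{E\times E}$, where $E=\{ E_1,E_2,I_n-E_1-E_2\}$, $T_1\in (E_1\mathbb{C}^{n\times n}E_1)^{-1}$, $T_3\in (E_2\mathbb{C}^{n\times n}E_2)^{-1}$ and $N_1+N_2+N_3+N_4,\ T_5\in \mathbb{C}^{n\times n}$ are nilpotent.
   Context: $\mathbb{C}^{n\times n}$ is the algebra of complex $n\times n$ matrices with conjugate transpose. The core-EP inverse $A^{\mathrm{cEP}}$ of $A$ is the unique $X$ with $XA^{k+1}=A^k$, $AX^2=X$, $(AX)^*=AX$ for some $k\in\mathbb{N}$. The core-EP order is $A\leq^{\mathrm{cEP}}B$ iff $AA^{\mathrm{cEP}}=BA^{\mathrm{cEP}}$ and $A^{\mathrm{cEP}}A=A^{\mathrm{cEP}}B$. For a set $E=\{E_1,E_2,E_3\}$ of idempotents summing to $I_n$ with $E_iE_j=0$ ($i\neq j$), a matrix $X$ is written $X=(E_iXE_j)_{E\times E}$. *)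

theory Defs
  imports "HOL-Analysis.Analysis"
begin

type_synonym 'n cmat = "complex ^'n ^'n"

definition cadj :: "'n::finite cmat \<Rightarrow> 'n cmat" where
  "cadj M = (\<chi> i j. cnj (M $ j $ i))"

primrec mpow :: "'n::finite cmat \<Rightarrow> nat \<Rightarrow> 'n cmat" where
  "mpow M 0 = mat 1"
| "mpow M (Suc k) = M ** mpow M k"

definition is_core_EP_inv :: "'n::finite cmat \<Rightarrow> 'n cmat \<Rightarrow> bool" where
  "is_core_EP_inv A X \<longleftrightarrow>
     (\<exists>k::nat. X ** mpow A (k+1) = mpow A k) \<and> A ** (X ** X) = X \<and> cadj (A ** X) = A ** X"

definition core_EP :: "'n::finite cmat \<Rightarrow> 'n cmat" where
  "core_EP A = (THE X. is_core_EP_inv A X)"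

definition core_EP_le :: "'n::finite cmat \<Rightarrow> 'n cmat \<Rightarrow> bool" where
  "core_EP_le A B \<longleftrightarrow> A ** core_EP A = B ** core_EP A \<and> core_EP A ** A = core_EP A ** B"

definition nilpotent_mat :: "'n::finite cmat \<Rightarrow> bool" where
  "nilpotent_mat M \<longleftrightarrow> (\<exists>k. mpow M k = 0)"

definition idem_system3 :: "'n::finite cmat \<Rightarrow> 'n cmat \<Rightarrow> 'n cmat \<Rightarrow> bool" where
  "idem_system3 E1 E2 E3 \<longleftrightarrow>
     E1 ** E1 = E1 \<and> E2 ** E2 = E2 \<and> E3 ** E3 = E3 \<and> E1 + E2 + E3 = mat 1 \<and>
     E1 ** E2 = 0 \<and> E2 ** E1 = 0 \<and> E1 ** E3 = 0 \<and> E3 ** E1 = 0 \<and>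
     E2 ** E3 = 0 \<and> E3 ** E2 = 0"

text \<open>T is invertible in the corner ring P C^{n x n} P (P idempotent).\<close>
definition corner_invertible :: "'n::finite cmat \<Rightarrow> 'n cmat \<Rightarrow> bool" where
  "corner_invertible P T \<longleftrightarrow> P ** T ** P = T \<and>
     (\<exists>Y. P ** Y ** P = Y \<and> T ** Y = P \<and> Y ** T = P)"

end

theory Submission
  imports Defs
begin


lemma mm_add_r: "((A::'a::semiring_1^'n^'m) + B) ** C = A ** C + B ** C"
  by (vector matrix_matrix_mult_def sum.distrib[symmetric] field_simps)
lemma mm_diff_l: "(A::'a::ring_1^'n^'m) ** (B - C) = A ** B - A ** C"
  by (vector matrix_matrix_mult_def sum_subtractf[symmetric] field_simps)
lemma mm_diff_r: "((A::'a::ring_1^'n^'m) - B) ** C = A ** C - B ** C"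
  by (vector matrix_matrix_mult_def sum_subtractf[symmetric] field_simps)

lemma cadj_mult: "cadj ((A::'n::finite cmat) ** B) = cadj B ** cadj A"
  by (simp add: cadj_def matrix_matrix_mult_def vec_eq_iff mult.commute)
lemma cadj_cadj[simp]: "cadj (cadj A) = A"
  by (simp add: cadj_def vec_eq_iff)
lemma cadj_one[simp]: "cadj (mat 1 :: 'n::finite cmat) = mat 1"
  by (simp add: cadj_def mat_def vec_eq_iff)
lemma cadj_diff: "cadj ((A::'n::finite cmat) - B) = cadj A - cadj B"
  by (simp add: cadj_def vec_eq_iff)

lemma mpow_Suc_right: "mpow M (Suc k) = mpow M k ** M"
  by (induction k) (simp_all add: matrix_mul_assoc)
lemma mpow_add: "mpow M (j + k) = mpow M j ** mpow M k"
  by (induction j) (simp_all add: matrix_mul_assoc)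



lemma mv_axis: "((A::'a::semiring_1^'n^'m) *v axis j 1) $ i = A $ i $ j"
  by (simp add: matrix_vector_mult_def axis_def if_distrib cong: if_cong)

lemma col_factor:
  fixes A :: "'a::semiring_1^'n^'m" and B :: "'a^'k^'m"
  assumes "\<And>j. \<exists>y. A *v axis j 1 = B *v y"
  shows "\<exists>W. A = B ** W"
proof -
  define y where "y j = (SOME y. A *v axis j 1 = B *v y)" for j
  have y: "A *v axis j 1 = B *v y j" for j
    unfolding y_def using someI_ex[OF assms[of j]] .
  define W where "W = (\<chi> i j. y j $ i)"
  have "A = B ** W"
  proof (subst vec_eq_iff, intro allI, subst vec_eq_iff, intro allI)
    fix i j
    have "A $ i $ j = (B *v y j) $ i" using y[of j] mv_axis[of A j i] by simp
    also have "\<dots> = (B ** W) $ i $ j"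
      by (simp add: W_def matrix_vector_mult_def matrix_matrix_mult_def)
    finally show "A $ i $ j = (B ** W) $ i $ j" .
  qed
  then show ?thesis by blast
qed

definition cip :: "complex^'n::finite \<Rightarrow> complex^'n \<Rightarrow> complex" where
  "cip x y = (\<Sum>i\<in>UNIV. cnj (x $ i) * y $ i)"

lemma inner_cip: "inner x y = Re (cip x y)"
  by (simp add: inner_vec_def cip_def inner_complex_def Re_sum)

lemma cip_cnj: "cip y x = cnj (cip x y)"
  by (simp add: cip_def mult.commute)

lemma cip_diff_r: "cip x (y - z) = cip x y - cip x z"
  by (simp add: cip_def algebra_simps sum_subtractf)

lemma cip_diff_l: "cip (x - y) z = cip x z - cip y z"
  by (simp add: cip_def algebra_simps sum_subtractf)

lemma cip_self_zero: "cip x x = 0 \<Longrightarrow> x = 0"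
  by (metis inner_cip inner_eq_zero_iff zero_complex.simps(1))

lemma mv_scale: "(K::complex^'n^'m) *v (c *s x) = c *s (K *v x)"
  by (simp add: vec_eq_iff matrix_vector_mult_def sum_distrib_left mult_ac)

lemma scaleR_vs: "c *\<^sub>R (x::complex^'n) = complex_of_real c *s x"
  by (subst vec_eq_iff, rule allI) (simp only: vector_scaleR_component vector_smult_component scaleR_conv_of_real[where 'a=complex])

lemma mv_scaleR: "(K::complex^'n^'m) *v (c *\<^sub>R x) = c *\<^sub>R (K *v x)"
  by (simp only: scaleR_vs mv_scale)

lemma subspace_range_mv: "subspace (range (\<lambda>x. (K::complex^'n^'m) *v x))"
  unfolding subspace_def
proof (intro conjI ballI allI)
  show "0 \<in> range ((*v) K)" using matrix_vector_mult_0_right[of K] by (metis rangeI)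
  fix x y assume "x \<in> range ((*v) K)" "y \<in> range ((*v) K)"
  then obtain a b where "x = K *v a" "y = K *v b" by auto
  then have "x + y = K *v (a + b)" by (simp add: matrix_vector_right_distrib)
  then show "x + y \<in> range ((*v) K)" by simp
next
  fix c :: real and x assume "x \<in> range ((*v) K)"
  then obtain a where "x = K *v a" by auto
  then have "c *\<^sub>R x = K *v (c *\<^sub>R a)" by (simp only: mv_scaleR)
  then show "c *\<^sub>R x \<in> range ((*v) K)" by simp
qed

lemma orth_to_cip:
  fixes K :: "complex^'n::finite^'n"
  assumes "\<And>w. w \<in> range ((*v) K) \<Longrightarrow> orthogonal z w" and "w \<in> range ((*v) K)"
  shows "cip w z = 0"
proof -
  obtain x where x: "w = K *v x" using assms(2) by auto
  have "\<i> *s w = K *v (\<i> *s x)" by (simp add: x mv_scale)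
  then have a: "inner z (\<i> *s w) = 0" using assms(1) unfolding orthogonal_def by auto
  have b: "inner z w = 0" using assms unfolding orthogonal_def by auto
  have "cip z (\<i> *s w) = \<i> * cip z w"
    by (simp add: cip_def sum_distrib_left mult_ac)
  then have "Re (\<i> * cip z w) = 0" using a inner_cip by metis
  moreover have "Re (cip z w) = 0" using b inner_cip by metis
  ultimately have "cip z w = 0" by (simp add: complex_eq_iff)
  then show ?thesis by (simp add: cip_cnj[of w z])
qed

lemma orth_proj:
  fixes K :: "complex^'n::finite^'n"
  shows "\<exists>P. P ** P = P \<and> cadj P = P \<and> P ** K = K \<and> (\<exists>Z. P = K ** Z)"
proof -
  let ?S = "range ((*v) K)"
  have spanS: "span ?S = ?S" using subspace_range_mv[of K] by (simp add: span_eq_iff)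
  have "\<exists>y. y \<in> ?S \<and> (\<forall>w\<in>?S. cip w (u - y) = 0)" for u
  proof -
    obtain y z where "y \<in> span ?S" "\<And>w. w \<in> span ?S \<Longrightarrow> orthogonal z w" "u = y + z"
      using orthogonal_subspace_decomp_exists[of ?S u] by metis
    then show ?thesis using orth_to_cip[where z=z and K=K] spanS by (intro exI[of _ y]) auto
  qed
  then obtain pr where pr: "\<And>u. pr u \<in> ?S" "\<And>u w. w \<in> ?S \<Longrightarrow> cip w (u - pr u) = 0"
    by metis
  define P where "P = (\<chi> i j. pr (axis j 1) $ i)"
  have Pcol: "P *v axis j 1 = pr (axis j 1)" for j
    by (simp add: vec_eq_iff mv_axis P_def)
  obtain Z where Z: "P = K ** Z"
    using col_factor[of P K] Pcol pr(1) by (metis imageE)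
  have PS: "P *v u \<in> ?S" for u
    by (simp add: Z matrix_vector_mul_assoc[symmetric])
  have Porth: "cip w (u - P *v u) = 0" if w: "w \<in> ?S" for u w
  proof -
    have e: "cnj (w $ j) = (\<Sum>i\<in>UNIV. cnj (w $ i) * P $ i $ j)" for j
    proof -
      have "cip w (axis j 1 - pr (axis j 1)) = 0" using pr(2)[OF w] .
      then have "cip w (axis j 1) = cip w (P *v axis j 1)" using Pcol cip_diff_r by (metis eq_iff_diff_eq_0)
      moreover have "cip w (axis j 1) = cnj (w $ j)"
        by (simp add: cip_def axis_def if_distrib cong: if_cong)
      moreover have "cip w (P *v axis j 1) = (\<Sum>i\<in>UNIV. cnj (w $ i) * P $ i $ j)"
        by (simp add: cip_def mv_axis)
      ultimately show ?thesis by simp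
    qed
    have "cip w (P *v u) = (\<Sum>i\<in>UNIV. cnj (w $ i) * (\<Sum>j\<in>UNIV. P $ i $ j * u $ j))"
      by (simp add: cip_def matrix_vector_mult_def)
    also have "\<dots> = (\<Sum>i\<in>UNIV. \<Sum>j\<in>UNIV. cnj (w $ i) * (P $ i $ j * u $ j))"
      by (simp add: sum_distrib_left)
    also have "\<dots> = (\<Sum>j\<in>UNIV. \<Sum>i\<in>UNIV. cnj (w $ i) * (P $ i $ j * u $ j))"
      by (rule sum.swap)
    also have "\<dots> = (\<Sum>j\<in>UNIV. (\<Sum>i\<in>UNIV. cnj (w $ i) * P $ i $ j) * u $ j)"
      by (simp add: sum_distrib_right mult.assoc)
    also have "\<dots> = (\<Sum>j\<in>UNIV. cnj (w $ j) * u $ j)" by (simp only: e[symmetric])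
    also have "\<dots> = cip w u" by (simp add: cip_def)
    finally show ?thesis by (simp add: cip_diff_r)
  qed
  have Pfix: "P *v v = v" if vS: "v \<in> ?S" for v
  proof -
    have d: "v - P *v v \<in> ?S"
    proof -
      obtain a where a: "v = K *v a" using vS by auto
      obtain b where b: "P *v v = K *v b" using PS[of v] by auto
      show ?thesis by (metis a b matrix_vector_mult_diff_distrib rangeI)
    qed
    have "cip (v - P *v v) (v - P *v v) = 0" using Porth[OF d] .
    then show ?thesis using cip_self_zero by (metis eq_iff_diff_eq_0)
  qed
  have PP: "P ** P = P"
    by (simp add: matrix_eq matrix_vector_mul_assoc[symmetric] Pfix PS)
  have PK: "P ** K = K"
    by (simp add: matrix_eq matrix_vector_mul_assoc[symmetric] Pfix)
  have psym: "cip (P *v a) b = cip a (P *v b)" for a b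
  proof -
    have "cip (P *v a) (b - P *v b) = 0" using Porth PS by blast
    then have 1: "cip (P *v a) b = cip (P *v a) (P *v b)" by (metis cip_diff_r eq_iff_diff_eq_0)
    have "cip (P *v b) (a - P *v a) = 0" using Porth PS by blast
    then have "cip (a - P *v a) (P *v b) = 0" by (metis cip_cnj complex_cnj_zero)
    then have 2: "cip a (P *v b) = cip (P *v a) (P *v b)" by (metis cip_diff_l eq_iff_diff_eq_0)
    show ?thesis using 1 2 by simp
  qed
  have cipax: "cip (axis i 1) v = v $ i" for i and v :: "complex^'n"
  proof -
    have "cip (axis i 1) v = (\<Sum>j\<in>UNIV. if j = i then v $ j else 0)"
      unfolding cip_def by (intro sum.cong) (auto simp: axis_def)
    then show ?thesis by simp
  qed
  have cP: "cadj P = P"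
  proof (subst vec_eq_iff, intro allI, subst vec_eq_iff, intro allI)
    fix i j
    have "P $ i $ j = cip (axis i 1) (P *v axis j 1)" by (simp add: cipax mv_axis)
    also have "\<dots> = cip (P *v axis i 1) (axis j 1)" by (rule psym[symmetric])
    also have "\<dots> = cnj (cip (axis j 1) (P *v axis i 1))" by (rule cip_cnj)
    also have "\<dots> = cnj (P $ j $ i)" by (simp only: cipax mv_axis)
    finally show "cadj P $ i $ j = P $ i $ j" by (simp add: cadj_def)
  qed
  show ?thesis by (intro exI[of _ P] conjI exI[of _ Z] PP PK Z cP)
qed



lemma stab: "\<exists>k W. mpow (M::'n::finite cmat) k = mpow M (Suc k) ** W"
proof -
  define R where "R k = range ((*v) (mpow M k))" for k
  define d where "d = (LEAST d. \<exists>k. dim (R k) = d)"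
  obtain k where k: "dim (R k) = d" using LeastI_ex[of "\<lambda>d. \<exists>k. dim (R k) = d"] d_def by blast
  have ge: "d \<le> dim (R (Suc k))" unfolding d_def by (rule Least_le) blast
  have sub: "R (Suc k) \<subseteq> R k"
  proof
    fix v assume "v \<in> R (Suc k)"
    then obtain x where "v = mpow M (Suc k) *v x" by (auto simp: R_def)
    then have "v = mpow M k *v (M *v x)" by (simp only: mpow_Suc_right matrix_vector_mul_assoc)
    then show "v \<in> R k" by (simp add: R_def)
  qed
  have eq: "R (Suc k) = R k"
    using subspace_dim_equal[OF _ _ sub] subspace_range_mv ge k unfolding R_def by metis
  have "\<exists>y. mpow M k *v axis j 1 = mpow M (Suc k) *v y" for j
  proof -
    have "mpow M k *v axis j 1 \<in> R (Suc k)" using eq by (simp add: R_def)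
    then show ?thesis by (auto simp: R_def)
  qed
  then show ?thesis using col_factor by blast
qed

lemma mm_rule: "A ** B = C \<Longrightarrow> A ** (B ** X) = C ** X"
  by (metis matrix_mul_assoc)

lemmas ms = matrix_mul_assoc[symmetric] mm_add_r matrix_add_ldistrib mm_diff_l mm_diff_r
  matrix_mul_lid matrix_mul_rid

lemma decomp:
  fixes M :: "'n::finite cmat"
  shows "\<exists>P Y G k. P ** P = P \<and> cadj P = P \<and> P ** mpow M k = mpow M k \<and>
     (mat 1 - P) ** M ** P = 0 \<and> P ** Y ** P = Y \<and> (P ** M ** P) ** Y = P \<and>
     Y ** (P ** M ** P) = P \<and> P = M ** G"
proof -
  obtain k W where W: "mpow M k = mpow M (Suc k) ** W" using stab by blast
  obtain P Z where PP: "P ** P = P" and cP: "cadj P = P" and PK: "P ** mpow M k = mpow M k"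
     and Z: "P = mpow M k ** Z"
    using orth_proj[of "mpow M k"] by blast
  define G where "G = mpow M k ** (W ** Z)"
  have MG: "M ** G = P"
    by (simp only: G_def matrix_mul_assoc mpow.simps(2)[symmetric] W[symmetric] Z[symmetric])
  have PG: "P ** G = G" by (simp add: G_def matrix_mul_assoc PK)
  have MP: "M ** P = P ** (M ** P)"
  proof -
    have "M ** P = mpow M (Suc k) ** Z" by (simp add: Z matrix_mul_assoc)
    also have "\<dots> = (P ** mpow M k) ** (M ** Z)"
      by (simp only: mpow_Suc_right PK matrix_mul_assoc)
    finally have "M ** P = P ** (mpow M k ** (M ** Z))" by (simp only: matrix_mul_assoc)
    then show ?thesis using PP by (metis matrix_mul_assoc)
  qed
  have PP': "P ** (P ** X) = P ** X" for X using mm_rule[OF PP] .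
  have PG': "P ** (G ** X) = G ** X" for X using mm_rule[OF PG] .
  have MG': "M ** (G ** X) = P ** X" for X using mm_rule[OF MG] .
  define Y where "Y = G ** P"
  have r1: "(mat 1 - P) ** M ** P = 0"
    by (simp add: ms MP[symmetric])
  have r2: "P ** Y ** P = Y" by (simp add: Y_def ms PP' PG' PP)
  have r3: "(P ** M ** P) ** Y = P"
    by (simp add: Y_def ms PG' PP' MG' PP MP[symmetric])
  define T' where "T' = P ** M ** P + (mat 1 - P)"
  define Y' where "Y' = Y + (mat 1 - P)"
  have "T' ** Y' = mat 1"
    unfolding T'_def Y'_def using r3 r2
    by (simp add: ms Y_def PG' PP' MG' PP MP[symmetric])
  then have "Y' ** T' = mat 1" using matrix_left_right_inverse by blast
  then have r4: "Y ** (P ** M ** P) = P"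
    unfolding T'_def Y'_def
    by (simp add: ms Y_def PG' PP' MG' PP MP[symmetric] algebra_simps)
  show ?thesis using PP cP PK r1 r2 r3 r4 MG[symmetric] by blast
qed



lemma nilp:
  fixes M P :: "'n::finite cmat"
  assumes RMP: "(mat 1 - P) ** M ** P = 0" and PK: "P ** mpow M k = mpow M k"
  shows "nilpotent_mat ((mat 1 - P) ** M ** (mat 1 - P))"
proof -
  define R where "R = mat 1 - P"
  have RMR: "R ** M ** R = R ** M"
    using RMP unfolding R_def by (simp add: mm_diff_l)
  have RMR': "R ** (M ** (R ** X)) = R ** (M ** X)" for X
    using mm_rule[OF RMR] by (simp add: matrix_mul_assoc)
  have pw: "mpow (R ** M) (Suc j) = R ** mpow M (Suc j)" for j
  proof (induction j)
    case 0 then show ?case by simp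
  next
    case (Suc j)
    have "mpow (R ** M) (Suc (Suc j)) = (R ** M) ** (R ** mpow M (Suc j))"
      using Suc by simp
    also have "\<dots> = R ** (M ** mpow M (Suc j))"
      by (simp add: matrix_mul_assoc[symmetric] RMR')
    finally show ?case by simp
  qed
  have RK: "R ** mpow M k = 0" unfolding R_def using PK by (simp add: mm_diff_r)
  have "mpow (R ** M) (Suc k) = 0"
    unfolding pw by (simp only: mpow_Suc_right matrix_mul_assoc RK times0_left)
  then show ?thesis unfolding nilpotent_mat_def R_def[symmetric] RMR by blast
qed

lemma cep_mono:
  assumes "X ** mpow A (k+1) = mpow A k" "k \<le> m"
  shows "X ** mpow A (m+1) = mpow A m"
  using assms(2)
proof (induction m rule: dec_induct)
  case base then show ?case using assms(1) .
next
  case (step m)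
  have "X ** mpow A (Suc m + 1) = (X ** mpow A (m+1)) ** A"
    by (metis Suc_eq_plus1 mpow_Suc_right matrix_mul_assoc)
  also have "\<dots> = mpow A (Suc m)" using step.IH by (simp only: mpow_Suc_right)
  finally show ?case .
qed

lemma cep_pow:
  assumes "A ** (X ** X) = X"
  shows "X = mpow A m ** mpow X (Suc m)"
proof (induction m)
  case 0 then show ?case by simp
next
  case (Suc m)
  have "mpow A (Suc m) ** mpow X (Suc (Suc m)) = mpow A m ** ((A ** (X ** X)) ** mpow X m)"
    by (simp only: mpow_Suc_right[of A m] mpow.simps(2)[of X] matrix_mul_assoc)
  also have "\<dots> = mpow A m ** mpow X (Suc m)" using assms by simp
  finally show ?case using Suc by simp
qed

lemma cep_unique:
  fixes A :: "'n::finite cmat"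
  assumes "is_core_EP_inv A X1" "is_core_EP_inv A X2"
  shows "X1 = X2"
proof -
  obtain k1 k2 where k1: "X1 ** mpow A (k1+1) = mpow A k1" and k2: "X2 ** mpow A (k2+1) = mpow A k2"
    using assms unfolding is_core_EP_inv_def by blast
  define k where "k = max k1 k2"
  have h1: "X1 ** mpow A (Suc k) = mpow A k" using cep_mono[OF k1, of k] k_def by simp
  have h2: "X2 ** mpow A (Suc k) = mpow A k" using cep_mono[OF k2, of k] k_def by simp
  have q1: "A ** (X1 ** X1) = X1" "cadj (A ** X1) = A ** X1" using assms(1) is_core_EP_inv_def by auto
  have q2: "A ** (X2 ** X2) = X2" "cadj (A ** X2) = A ** X2" using assms(2) is_core_EP_inv_def by auto
  have gen: "A ** X = mpow A k ** (A ** mpow X (Suc k)) \<and> (A ** X) ** mpow A k = mpow A k \<and>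
      X ** (A ** X) = X"
    if x1: "X ** mpow A (Suc k) = mpow A k" and x2: "A ** (X ** X) = X" for X
  proof (intro conjI)
    have xp: "X = mpow A k ** mpow X (Suc k)" by (rule cep_pow[OF x2])
    have "A ** X = (A ** mpow A k) ** mpow X (Suc k)"
      by (subst xp) (simp only: matrix_mul_assoc)
    also have "\<dots> = mpow A k ** (A ** mpow X (Suc k))"
      by (simp only: mpow.simps(2)[symmetric] mpow_Suc_right matrix_mul_assoc)
    finally show "A ** X = mpow A k ** (A ** mpow X (Suc k))" .
    have "(A ** X) ** mpow A k = (A ** (X ** X)) ** mpow A (Suc k)"
      by (simp only: x1[symmetric] matrix_mul_assoc)
    then show "(A ** X) ** mpow A k = mpow A k" using x1 x2 by simp
    have "X ** (A ** X) = (X ** mpow A (Suc k)) ** mpow X (Suc k)"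
      by (subst (2) xp) (simp only: mpow.simps(2) matrix_mul_assoc)
    then show "X ** (A ** X) = X" using x1 xp by simp
  qed
  obtain a1 b1 c1 where g1: "A ** X1 = mpow A k ** (A ** mpow X1 (Suc k))"
    "(A ** X1) ** mpow A k = mpow A k" "X1 ** (A ** X1) = X1"
    using gen[OF h1 q1(1)] by blast
  have g2: "A ** X2 = mpow A k ** (A ** mpow X2 (Suc k))"
    "(A ** X2) ** mpow A k = mpow A k" "X2 ** (A ** X2) = X2"
    using gen[OF h2 q2(1)] by blast+
  have "(A ** X2) ** (A ** X1) = ((A ** X2) ** mpow A k) ** (A ** mpow X1 (Suc k))"
    by (simp only: g1(1) matrix_mul_assoc)
  also have "\<dots> = A ** X1" by (simp only: g2(2) g1(1)[symmetric])
  finally have p21: "(A ** X2) ** (A ** X1) = A ** X1" .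
  have "(A ** X1) ** (A ** X2) = ((A ** X1) ** mpow A k) ** (A ** mpow X2 (Suc k))"
    by (simp only: g2(1) matrix_mul_assoc)
  also have "\<dots> = A ** X2" by (simp only: g1(2) g2(1)[symmetric])
  finally have p12: "(A ** X1) ** (A ** X2) = A ** X2" .
  have P: "A ** X1 = A ** X2"
  proof -
    have "A ** X1 = cadj (A ** X1)" using q1 by simp
    also have "\<dots> = cadj ((A ** X2) ** (A ** X1))" using p21 by simp
    also have "\<dots> = (A ** X1) ** (A ** X2)" by (simp only: cadj_mult[of "A ** X2" "A ** X1"] q1(2) q2(2))
    finally show ?thesis using p12 by simp
  qed
  have "X1 = X1 ** (A ** X2)" using g1(3) P by simp
  also have "\<dots> = (X1 ** mpow A (Suc k)) ** mpow X2 (Suc k)"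
    by (subst cep_pow[OF q2(1), of k]) (simp only: mpow.simps(2) matrix_mul_assoc)
  also have "\<dots> = X2" using h1 cep_pow[OF q2(1), of k] by simp
  finally show ?thesis .
qed



lemma cadj_zero[simp]: "cadj (0::'n::finite cmat) = 0"
  by (simp add: cadj_def vec_eq_iff)

lemma core_EP_facts:
  fixes A :: "'n::finite cmat"
  shows "\<exists>P k. P ** P = P \<and> cadj P = P \<and> P ** mpow A k = mpow A k \<and>
     (mat 1 - P) ** A ** P = 0 \<and> P ** core_EP A ** P = core_EP A \<and>
     (P ** A ** P) ** core_EP A = P \<and> core_EP A ** (P ** A ** P) = P \<and> A ** core_EP A = P"
proof -
  obtain P Y G k where PP: "P ** P = P" and cP: "cadj P = P" and PK: "P ** mpow A k = mpow A k"
    and r1: "(mat 1 - P) ** A ** P = 0" and r2: "P ** Y ** P = Y" and r3: "(P ** A ** P) ** Y = P"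
    and r4: "Y ** (P ** A ** P) = P"
    using decomp[of A] by blast
  have AP: "A ** P = P ** A ** P" using r1 by (simp add: mm_diff_r)
  have YP: "Y ** P = Y" by (metis r2 PP matrix_mul_assoc)
  have PY: "P ** Y = Y" by (metis r2 PP matrix_mul_assoc)
  have AY: "A ** Y = P"
    by (metis PY AP r3 matrix_mul_assoc)
  have "is_core_EP_inv A Y"
    unfolding is_core_EP_inv_def
  proof (intro conjI exI[of _ k])
    have "Y ** mpow A (k+1) = Y ** (A ** (P ** mpow A k))" by (simp add: PK)
    also have "\<dots> = (Y ** (P ** A ** P)) ** mpow A k" by (simp only: matrix_mul_assoc AP)
    also have "\<dots> = mpow A k" by (simp only: r4 PK)
    finally show "Y ** mpow A (k+1) = mpow A k" .
    show "A ** (Y ** Y) = Y" by (simp only: matrix_mul_assoc AY PY)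
    show "cadj (A ** Y) = A ** Y" by (simp only: AY cP)
  qed
  then have "core_EP A = Y"
    unfolding core_EP_def using cep_unique by (intro the_equality) blast+
  then show ?thesis using PP cP PK r1 r2 r3 r4 AY by metis
qed



theorem corollary4p5:
  fixes A B :: "complex ^'n::finite ^'n"
  shows "core_EP_le A B \<longleftrightarrow>
    (\<exists>E1 E2 E3 T1 S1 S2 N1 N2 N3 N4 T3 T4 T5.
       E1 = A ** core_EP A \<and> cadj E2 = E2 \<and> E2 ** E2 = E2 \<and> E3 = mat 1 - E1 - E2 \<and>
       idem_system3 E1 E2 E3 \<and>
       E1 ** A ** E1 = T1 \<and> E1 ** A ** E2 = S1 \<and> E1 ** A ** E3 = S2 \<and>
       E2 ** A ** E1 = 0 \<and> E2 ** A ** E2 = N1 \<and> E2 ** A ** E3 = N2 \<and>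
       E3 ** A ** E1 = 0 \<and> E3 ** A ** E2 = N3 \<and> E3 ** A ** E3 = N4 \<and>
       E1 ** B ** E1 = T1 \<and> E1 ** B ** E2 = S1 \<and> E1 ** B ** E3 = S2 \<and>
       E2 ** B ** E1 = 0 \<and> E2 ** B ** E2 = T3 \<and> E2 ** B ** E3 = T4 \<and>
       E3 ** B ** E1 = 0 \<and> E3 ** B ** E2 = 0 \<and> E3 ** B ** E3 = T5 \<and>
       corner_invertible E1 T1 \<and> corner_invertible E2 T3 \<and>
       nilpotent_mat (N1 + N2 + N3 + N4) \<and> nilpotent_mat T5)"
  (is "?L \<longleftrightarrow> ?R")
proof -
  define X where "X = core_EP A"
  obtain P k where PP: "P ** P = P" and cP: "cadj P = P" and PK: "P ** mpow A k = mpow A k"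
    and r1: "(mat 1 - P) ** A ** P = 0" and r2: "P ** X ** P = X" and r3: "(P ** A ** P) ** X = P"
    and r4: "X ** (P ** A ** P) = P" and AX: "A ** X = P"
    using core_EP_facts[of A] unfolding X_def[symmetric] by blast
  have AP: "A ** P = P ** A ** P" using r1 by (simp add: mm_diff_r)
  have XP: "X ** P = X" by (metis r2 PP matrix_mul_assoc)
  have PX: "P ** X = X" by (metis r2 PP matrix_mul_assoc)
  show ?thesis
  proof
    assume ?R
    then obtain E2 E3 where E1: "A ** X = A ** X" and
      sys: "idem_system3 P E2 E3" and
      b1: "P ** B ** P = P ** A ** P" and b2: "P ** B ** E2 = P ** A ** E2" and
      b3: "P ** B ** E3 = P ** A ** E3" and
      z2: "E2 ** B ** P = 0" and z3: "E3 ** B ** P = 0"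
      unfolding X_def[symmetric] AX by metis
    have sum: "P + E2 + E3 = mat 1" using sys unfolding idem_system3_def by blast
    have PB: "P ** B = P ** A"
    proof -
      have "P ** B = P ** B ** (P + E2 + E3)" using sum by simp
      also have "\<dots> = P ** A ** (P + E2 + E3)" using b1 b2 b3 by (simp add: matrix_add_ldistrib)
      finally show ?thesis using sum by simp
    qed
    have BP: "B ** P = P ** A ** P"
    proof -
      have "B ** P = (P + E2 + E3) ** B ** P" using sum by simp
      also have "\<dots> = P ** B ** P" using z2 z3 by (simp add: mm_add_r)
      finally show ?thesis using b1 by simp
    qed
    have "A ** X = B ** X"
      by (metis AX BP PX r3 matrix_mul_assoc)
    moreover have "X ** A = X ** B"
      by (metis XP PB matrix_mul_assoc)
    ultimately show ?L unfolding core_EP_le_def X_def by simp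
  next
    assume ?L
    then have BX: "B ** X = P" and XB: "X ** B = X ** A"
      unfolding core_EP_le_def X_def[symmetric] AX by auto
    have PB: "P ** B = P ** A" by (metis AX XB matrix_mul_assoc)
    have BP: "B ** P = P ** A ** P" by (metis AP BX r4 XP matrix_mul_assoc)
    define B' where "B' = (mat 1 - P) ** B ** (mat 1 - P)"
    obtain Q YQ GQ kQ where QQ: "Q ** Q = Q" and cQ: "cadj Q = Q" and QK: "Q ** mpow B' kQ = mpow B' kQ"
      and s1: "(mat 1 - Q) ** B' ** Q = 0" and s2: "Q ** YQ ** Q = YQ"
      and s3: "(Q ** B' ** Q) ** YQ = Q" and s4: "YQ ** (Q ** B' ** Q) = Q" and QG: "Q = B' ** GQ"
      using decomp[of B'] by blast
    have PR: "P ** (mat 1 - P) = 0" by (simp add: mm_diff_l PP)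
    have PQ: "P ** Q = 0" unfolding QG B'_def by (metis PR matrix_mul_assoc times0_left)
    have QP: "Q ** P = 0"
    proof -
      have "Q ** P = cadj (P ** Q)" by (simp only: cadj_mult cP cQ)
      then show ?thesis by (simp add: PQ)
    qed
    have PP': "P ** (P ** Z) = P ** Z" for Z using mm_rule[OF PP] .
    have QQ': "Q ** (Q ** Z) = Q ** Z" for Z using mm_rule[OF QQ] .
    have PQ': "P ** (Q ** Z) = 0" for Z using mm_rule[OF PQ] by simp
    have QP': "Q ** (P ** Z) = 0" for Z using mm_rule[OF QP] by simp
    note facts = ms PP PP' QQ QQ' PQ PQ' QP QP'
    have QBQ: "Q ** B' ** Q = Q ** B ** Q" unfolding B'_def by (simp add: facts)
    have s1': "B ** Q - P ** (B ** Q) - Q ** (B ** Q) = 0"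
      using s1 unfolding B'_def by (simp add: facts algebra_simps)
    define E3 where "E3 = mat 1 - P - Q"
    have sys: "idem_system3 P Q E3"
      unfolding idem_system3_def E3_def by (simp add: facts)
    have e3bq: "E3 ** B ** Q = 0"
      unfolding E3_def using s1' by (simp add: facts algebra_simps)
    have qap: "Q ** A ** P = 0"
      by (metis AP QP times0_left matrix_mul_assoc)
    have qbp: "Q ** B ** P = 0"
      by (metis BP QP times0_left matrix_mul_assoc)
    have APr: "P ** (A ** P) = A ** P" using AP PP by (metis matrix_mul_assoc)
    have BPr: "B ** P = A ** P" using BP AP by metis
    have qap': "Q ** (A ** P) = 0" using qap by (simp add: matrix_mul_assoc)
    have e3ap: "E3 ** A ** P = 0"
      unfolding E3_def by (simp add: facts APr qap')
    have e3bp: "E3 ** B ** P = 0"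
      unfolding E3_def by (simp add: facts APr qap' BPr)
    have pb: "P ** B ** Z = P ** A ** Z" for Z using PB by simp
    have Nsum: "Q ** A ** Q + Q ** A ** E3 + E3 ** A ** Q + E3 ** A ** E3 =
        (mat 1 - P) ** A ** (mat 1 - P)"
      unfolding E3_def by (simp add: facts algebra_simps)
    have T5: "E3 ** B ** E3 = (mat 1 - Q) ** B' ** (mat 1 - Q)"
      unfolding E3_def B'_def by (simp add: facts algebra_simps)
    have ci1: "corner_invertible P (P ** A ** P)"
      unfolding corner_invertible_def using r2 r3 r4
      by (intro conjI exI[of _ X]) (simp_all add: ms PP PP')
    have ci2: "corner_invertible Q (Q ** B ** Q)"
      unfolding corner_invertible_def using s2 s3 s4 unfolding QBQ
      by (intro conjI exI[of _ YQ]) (simp_all add: ms QQ QQ')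
    have n1: "nilpotent_mat ((mat 1 - P) ** A ** (mat 1 - P))" by (rule nilp[OF r1 PK])
    have n2: "nilpotent_mat ((mat 1 - Q) ** B' ** (mat 1 - Q))" by (rule nilp[OF s1 QK])
    show ?R
      apply (rule exI[of _ P], rule exI[of _ Q], rule exI[of _ E3])
      apply (rule exI[of _ "P ** A ** P"], rule exI[of _ "P ** A ** Q"], rule exI[of _ "P ** A ** E3"])
      apply (rule exI[of _ "Q ** A ** Q"], rule exI[of _ "Q ** A ** E3"])
      apply (rule exI[of _ "E3 ** A ** Q"], rule exI[of _ "E3 ** A ** E3"])
      apply (rule exI[of _ "Q ** B ** Q"], rule exI[of _ "Q ** B ** E3"], rule exI[of _ "E3 ** B ** E3"])
      using AX X_def cQ QQ E3_def sys qap e3ap pb qbp e3bp e3bq ci1 ci2 n1 n2 Nsum T5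
      by (simp only: simp_thms refl pb)
  qed
qed

end
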